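(* Consider an infinite balls-in-bins process with $d\ge1$ labeled bins: at each time $t=1,2,\ldots$ one ball is placed into a bin chosen uniformly at random from $\{1,\ldots,d\}$, independently over time, and $N^{(i)}_t$ denotes the number of balls in bin $i$ at time $t$. Then almost surely: (1) for each fixed $i\in[d]$, $N^{(i)}_t=\max_{j\in[d]}N^{(j)}_t$ for infinitely many $t$; (2) for each fixed $i,j\in[d]$, $N^{(i)}_t=N^{(j)}_t=\max_{k\in[d]}N^{(k)}_t$ for infinitely many $t$. *)

theory Defs
  imports "HOL-Probability.Probability"
begin

definition bin_count :: "(nat \<Rightarrow> 'a \<Rightarrow> nat) \<Rightarrow> nat \<Rightarrow> nat \<Rightarrow> 'a \<Rightarrow> nat" where
  "bin_count X i t \<omega> = card {s \<in> {1..t}. X s \<omega> = i}"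

definition max_load :: "(nat \<Rightarrow> 'a \<Rightarrow> nat) \<Rightarrow> nat \<Rightarrow> nat \<Rightarrow> 'a \<Rightarrow> nat" where
  "max_load X d t \<omega> = Max ((\<lambda>k. bin_count X k t \<omega>) ` {1..d})"

end

theory Submission
  imports Defs
begin


definition cnt :: "(nat \<Rightarrow> nat) \<Rightarrow> nat \<Rightarrow> nat \<Rightarrow> nat" where
  "cnt x k t = card {s\<in>{1..t}. x s = k}"

definition cntf :: "nat \<Rightarrow> (nat \<Rightarrow> nat) \<Rightarrow> nat \<Rightarrow> nat \<Rightarrow> nat" where
  "cntf n x k t = card {s\<in>{n<..t}. x s = k}"

definition tie :: "nat \<Rightarrow> nat \<Rightarrow> nat \<Rightarrow> (nat \<Rightarrow> nat) \<Rightarrow> nat \<Rightarrow> bool" where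
  "tie d i j x t \<longleftrightarrow> cnt x i t = cnt x j t \<and> (\<forall>l\<in>{1..d}. cnt x l t \<le> cnt x j t)"

definition near :: "nat \<Rightarrow> nat \<Rightarrow> nat \<Rightarrow> (nat \<Rightarrow> nat) \<Rightarrow> nat \<Rightarrow> bool" where
  "near d m k x t \<longleftrightarrow> (\<forall>l\<in>{1..d}. cnt x l t \<le> cnt x k t + m)"

definition nearf :: "nat \<Rightarrow> nat \<Rightarrow> nat \<Rightarrow> nat \<Rightarrow> (nat \<Rightarrow> nat) \<Rightarrow> nat \<Rightarrow> bool" where
  "nearf d n m k x t \<longleftrightarrow> (\<forall>l\<in>{1..d}. cntf n x l t \<le> cntf n x k t + m)"

lemma cnt_0 [simp]: "cnt x k 0 = 0"
  by (simp add: cnt_def)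

lemma cnt_Suc: "cnt x k (Suc t) = cnt x k t + (if x (Suc t) = k then 1 else 0)"
proof -
  have "{s\<in>{1..Suc t}. x s = k} = {s\<in>{1..t}. x s = k} \<union> (if x (Suc t) = k then {Suc t} else {})"
    by (auto simp: le_Suc_eq)
  then show ?thesis by (simp add: cnt_def)
qed

lemma cnt_local: "(\<And>s. s \<in> {1..t} \<Longrightarrow> x s = y s) \<Longrightarrow> cnt x k t = cnt y k t"
  unfolding cnt_def by (intro arg_cong[where f=card]) auto

lemma cnt_le: "cnt x k t \<le> t"
proof -
  have "cnt x k t \<le> card {1..t}" unfolding cnt_def by (intro card_mono) auto
  then show ?thesis by simp
qed

lemma cnt_split: assumes "n \<le> t" shows "cnt x k t = cnt x k n + cntf n x k t"
proof -
  have "{s\<in>{1..t}. x s = k} = {s\<in>{1..n}. x s = k} \<union> {s\<in>{n<..t}. x s = k}"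
    using assms by auto
  moreover have "{s\<in>{1..n}. x s = k} \<inter> {s\<in>{n<..t}. x s = k} = {}" by auto
  ultimately show ?thesis unfolding cnt_def cntf_def
    by (simp add: card_Un_disjoint)
qed

lemma near_nearf: "n \<le> t \<Longrightarrow> near d m k x t \<Longrightarrow> nearf d n (m+n) k x t"
  unfolding near_def nearf_def
proof safe
  fix l assume "n \<le> t" "\<forall>l\<in>{1..d}. cnt x l t \<le> cnt x k t + m" "l \<in> {1..d}"
  then show "cntf n x l t \<le> cntf n x k t + (m + n)"
    using cnt_split[of n t x l] cnt_split[of n t x k] cnt_le[of x k n] by force
qed

lemma nearf_near: "n \<le> t \<Longrightarrow> nearf d n m k x t \<Longrightarrow> near d (m+n) k x t"
  unfolding near_def nearf_def
proof safe
  fix l assume "n \<le> t" "\<forall>l\<in>{1..d}. cntf n x l t \<le> cntf n x k t + m" "l \<in> {1..d}"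
  then show "cnt x l t \<le> cnt x k t + (m + n)"
    using cnt_split[of n t x l] cnt_split[of n t x k] cnt_le[of x l n] by force
qed

lemma leader_exists:
  assumes "d \<ge> 1" shows "\<exists>k\<in>{1..d}. tie d k k x t"
proof -
  let ?S = "(\<lambda>l. cnt x l t) ` {1..d}"
  have "Max ?S \<in> ?S" using assms by (intro Max_in) auto
  then obtain k where k: "k \<in> {1..d}" "cnt x k t = Max ?S" by auto
  have "\<forall>l\<in>{1..d}. cnt x l t \<le> cnt x k t"
  proof
    fix l assume "l \<in> {1..d}"
    then have "cnt x l t \<le> Max ?S" by (intro Max_ge) auto
    then show "cnt x l t \<le> cnt x k t" using k(2) by simp
  qed
  then have "tie d k k x t" unfolding tie_def by simp
  then show ?thesis using k(1) by auto
qed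

lemma some_leader_io:
  assumes "d \<ge> 1" shows "\<exists>k\<in>{1..d}. \<exists>\<^sub>\<infinity>t. tie d k k x t"
proof -
  have "\<exists>\<^sub>\<infinity>t. \<exists>k\<in>{1..d}. tie d k k x t"
    using leader_exists[OF assms] by (auto simp: INFM_nat_le)
  then show ?thesis by (subst (asm) INFM_finite_Bex_distrib) auto
qed

lemma switch_tie:
  assumes "d \<ge> 2" and all: "\<forall>k\<in>{1..d}. \<exists>\<^sub>\<infinity>t. tie d k k x t"
  shows "\<exists>k\<in>{1..d}. \<exists>l\<in>{1..d}. k \<noteq> l \<and> (\<exists>\<^sub>\<infinity>t. tie d k l x t)"
proof (rule ccontr)
  assume H: "\<not> ?thesis"
  have "\<forall>\<^sub>\<infinity>t. \<not> (k \<noteq> l \<and> tie d k l x t)" if "k \<in> {1..d}" "l \<in> {1..d}" for k l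
  proof -
    have "\<not> (k \<noteq> l \<and> (\<exists>\<^sub>\<infinity>t. tie d k l x t))" using H that by blast
    then have "\<not> (\<exists>\<^sub>\<infinity>t. k \<noteq> l \<and> tie d k l x t)" by simp
    then show ?thesis by (simp only: not_INFM)
  qed
  then have "\<forall>\<^sub>\<infinity>t. \<forall>k\<in>{1..d}. \<forall>l\<in>{1..d}. \<not> (k \<noteq> l \<and> tie d k l x t)"
    by (simp add: eventually_ball_finite_distrib)
  then obtain n where "\<forall>t\<ge>n. \<forall>k\<in>{1..d}. \<forall>l\<in>{1..d}. \<not> (k \<noteq> l \<and> tie d k l x t)"
    by (auto simp: MOST_nat_le)
  then have n: "\<And>t k l. t \<ge> n \<Longrightarrow> k \<in> {1..d} \<Longrightarrow> l \<in> {1..d} \<Longrightarrow> k \<noteq> l \<Longrightarrow> \<not> tie d k l x t"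
    by blast
  obtain k0 where k0: "k0 \<in> {1..d}" "tie d k0 k0 x n" using leader_exists[of d x n] assms(1) by auto
  have stay: "tie d k0 k0 x t" if "t \<ge> n" for t
    using that
  proof (induction t rule: dec_induct)
    case base then show ?case by (rule k0)
  next
    case (step t)
    have "cnt x l (Suc t) \<le> cnt x k0 (Suc t)" if l: "l \<in> {1..d}" for l
    proof (cases "x (Suc t) = l \<and> l \<noteq> k0")
      case True
      have le: "cnt x l t \<le> cnt x k0 t" using step.IH l unfolding tie_def by auto
      have "\<not> tie d l k0 x t" using n[of t l k0] True k0(1) step.hyps l by auto
      then have "cnt x l t \<noteq> cnt x k0 t" using step.IH unfolding tie_def by auto
      with le have "cnt x l t < cnt x k0 t" by simp
      then show ?thesis using True by (simp add: cnt_Suc)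
    next
      case False
      have "cnt x l t \<le> cnt x k0 t" using step.IH l unfolding tie_def by auto
      then show ?thesis using False by (auto simp add: cnt_Suc)
    qed
    then show ?case unfolding tie_def by auto
  qed
  define k1 where "k1 = (if k0 = 1 then 2 else (1::nat))"
  have k1: "k1 \<in> {1..d}" "k1 \<noteq> k0" using assms(1) k0(1) by (auto simp: k1_def)
  then have "\<exists>\<^sub>\<infinity>t. tie d k1 k1 x t" using all by auto
  then obtain t where t: "t \<ge> n" "tie d k1 k1 x t" by (auto simp: INFM_nat_le)
  have a: "cnt x k1 t \<le> cnt x k0 t" using stay[OF t(1)] k1(1) unfolding tie_def by auto
  have b: "cnt x k0 t \<le> cnt x k1 t" using t(2) k0(1) unfolding tie_def by auto
  have "tie d k1 k0 x t" using stay[OF t(1)] a b unfolding tie_def by auto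
  then show False using n[OF t(1) k1(1) k0(1) k1(2)] by simp
qed




lemma pattern_tie:
  assumes d: "d \<ge> 1" and ij: "i \<in> {1..d}" "j \<in> {1..d}"
    and ni: "near d m i x s" and nj: "near d m j x s"
    and Mx: "Mx = Max ((\<lambda>l. cnt x l s) ` {1..d})"
    and a: "a = Mx - cnt x i s" and b: "b = Mx - cnt x j s"
    and pre: "\<And>r. r \<in> {1..s} \<Longrightarrow> y r = x r"
    and pat: "\<And>q. q \<in> {1..2*m} \<Longrightarrow> y (s+q) = (if q \<le> a then i else j)"
  shows "a + b \<le> 2*m" "tie d i j y (s+a+b)"
proof -
  let ?S = "(\<lambda>l. cnt x l s) ` {1..d}"
  have geM: "cnt x l s \<le> Mx" if "l \<in> {1..d}" for l
    unfolding Mx using that by (intro Max_ge) auto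
  have Mi: "Mx \<le> cnt x i s + m"
    unfolding Mx using ni d by (subst Max_le_iff) (auto simp: near_def)
  have Mj: "Mx \<le> cnt x j s + m"
    unfolding Mx using nj d by (subst Max_le_iff) (auto simp: near_def)
  show ab: "a + b \<le> 2*m" using Mi Mj a b by simp
  have step: "cnt y l (s+c) = cnt x l s + (if l = i then min c a else 0) + (if l = j then c - a else 0)"
    if "c \<le> a + b" for c l
    using that
  proof (induction c)
    case 0
    have "cnt y l s = cnt x l s" using pre by (intro cnt_local) auto
    then show ?case by simp
  next
    case (Suc c)
    have IH: "cnt y l (s+c) = cnt x l s + (if l = i then min c a else 0) + (if l = j then c - a else 0)"
      using Suc by simp
    have yv: "y (Suc (s + c)) = (if Suc c \<le> a then i else j)"
      using pat[of "Suc c"] Suc.prems ab by simp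
    show ?case using IH yv by (auto simp add: cnt_Suc)
  qed
  have fin: "cnt y l (s+a+b) = cnt x l s + (if l = i then a else 0) + (if l = j then b else 0)" for l
    using step[of "a+b" l] by (simp add: add.assoc)
  have ci: "cnt x i s \<le> Mx" "cnt x j s \<le> Mx" using geM ij by auto
  show "tie d i j y (s+a+b)"
    unfolding tie_def
  proof (intro conjI ballI)
    show "cnt y i (s+a+b) = cnt y j (s+a+b)" using fin[of i] fin[of j] a b ci by auto
    fix l assume l: "l \<in> {1..d}"
    show "cnt y l (s+a+b) \<le> cnt y j (s+a+b)"
      using fin[of l] fin[of j] a b ci geM[OF l] by auto
  qed
qed

lemma tie_iff_max:
  assumes "d \<ge> 1" "j \<in> {1..d}"
  shows "(cnt x j t = Max ((\<lambda>l. cnt x l t) ` {1..d})) \<longleftrightarrow> (\<forall>l\<in>{1..d}. cnt x l t \<le> cnt x j t)"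
proof
  assume "cnt x j t = Max ((\<lambda>l. cnt x l t) ` {1..d})"
  then show "\<forall>l\<in>{1..d}. cnt x l t \<le> cnt x j t" by (metis Max_ge finite_atLeastAtMost finite_imageI image_eqI)
next
  assume H: "\<forall>l\<in>{1..d}. cnt x l t \<le> cnt x j t"
  show "cnt x j t = Max ((\<lambda>l. cnt x l t) ` {1..d})"
    using assms H by (intro antisym Max_ge) (auto simp: Max_le_iff)
qed




definition loc :: "nat set \<Rightarrow> ((nat \<Rightarrow> nat) \<Rightarrow> bool) \<Rightarrow> bool" where
  "loc J P \<longleftrightarrow> (\<forall>x y. (\<forall>s\<in>J. x s = y s) \<longrightarrow> P x = P y)"

lemma locD: "loc J P \<Longrightarrow> (\<And>s. s \<in> J \<Longrightarrow> x s = y s) \<Longrightarrow> P x = P y"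
  unfolding loc_def by blast

lemma loc_mono: "loc J P \<Longrightarrow> J \<subseteq> K \<Longrightarrow> loc K P"
  unfolding loc_def by blast

lemma loc_conj: "loc J P \<Longrightarrow> loc J Q \<Longrightarrow> loc J (\<lambda>x. P x \<and> Q x)"
  unfolding loc_def by blast

lemma loc_not: "loc J P \<Longrightarrow> loc J (\<lambda>x. \<not> P x)"
  unfolding loc_def by blast

lemma loc_tie: "loc {1..t} (\<lambda>x. tie d i j x t)"
  unfolding loc_def tie_def
proof (intro allI impI)
  fix x y :: "nat \<Rightarrow> nat" assume h: "\<forall>s\<in>{1..t}. x s = y s"
  have "cnt x k t = cnt y k t" for k using h by (intro cnt_local) auto
  then show "(cnt x i t = cnt x j t \<and> (\<forall>l\<in>{1..d}. cnt x l t \<le> cnt x j t)) =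
    (cnt y i t = cnt y j t \<and> (\<forall>l\<in>{1..d}. cnt y l t \<le> cnt y j t))" by simp
qed

lemma loc_near: "loc {1..t} (\<lambda>x. near d m k x t)"
  unfolding loc_def near_def
proof (intro allI impI)
  fix x y :: "nat \<Rightarrow> nat" assume h: "\<forall>s\<in>{1..t}. x s = y s"
  have "cnt x k t = cnt y k t" for k using h by (intro cnt_local) auto
  then show "(\<forall>l\<in>{1..d}. cnt x l t \<le> cnt x k t + m) = (\<forall>l\<in>{1..d}. cnt y l t \<le> cnt y k t + m)" by simp
qed

lemma loc_nearf: "loc {Suc n..t} (\<lambda>x. nearf d n m k x t)"
  unfolding loc_def nearf_def
proof (intro allI impI)
  fix x y :: "nat \<Rightarrow> nat" assume h: "\<forall>s\<in>{Suc n..t}. x s = y s"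
  have "cntf n x k t = cntf n y k t" for k unfolding cntf_def
    using h by (intro arg_cong[where f=card]) auto
  then show "(\<forall>l\<in>{1..d}. cntf n x l t \<le> cntf n x k t + m) = (\<forall>l\<in>{1..d}. cntf n y l t \<le> cntf n y k t + m)" by simp
qed

locale bins = prob_space M for M :: "'a measure" +
  fixes X :: "nat \<Rightarrow> 'a \<Rightarrow> nat" and d :: nat
  assumes d1: "d \<ge> 1"
    and ind: "indep_vars (\<lambda>_. count_space UNIV) X {1..}"
    and unif: "\<And>t. t \<ge> 1 \<Longrightarrow> distr M (count_space UNIV) (X t) = measure_pmf (pmf_of_set {1..d})"
begin

definition ev :: "((nat \<Rightarrow> nat) \<Rightarrow> bool) \<Rightarrow> 'a set" where
  "ev P = {\<omega> \<in> space M. P (\<lambda>t. X t \<omega>)}"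

definition cyl :: "nat set \<Rightarrow> (nat \<Rightarrow> nat) \<Rightarrow> 'a set" where
  "cyl J u = {\<omega> \<in> space M. \<forall>s\<in>J. X s \<omega> = u s}"

lemma X_meas: "s \<ge> 1 \<Longrightarrow> X s \<in> measurable M (count_space UNIV)"
  using ind unfolding indep_vars_def by auto

lemma X_pre: "s \<ge> 1 \<Longrightarrow> X s -` B \<inter> space M \<in> events"
  using X_meas by (rule measurable_sets) auto

lemma ev_in_sigma:
  assumes S: "sigma_algebra (space M) S" and J: "finite J"
    and gen: "\<And>s a. s \<in> J \<Longrightarrow> X s -` {a} \<inter> space M \<in> S"
    and P: "loc J P"
  shows "ev P \<in> S"
proof -
  interpret S: sigma_algebra "space M" S by (rule S)
  have cylS: "cyl J u \<in> S" for u
  proof (cases "J = {}")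
    case True
    then have "cyl J u = space M" by (auto simp: cyl_def)
    then show ?thesis by simp
  next
    case False
    have "cyl J u = (\<Inter>s\<in>J. X s -` {u s} \<inter> space M)"
      using False by (auto simp: cyl_def)
    also have "\<dots> \<in> S" using False J gen by (intro S.finite_INT) auto
    finally show ?thesis .
  qed
  have eq: "ev P = (\<Union>u\<in>{u \<in> PiE J (\<lambda>_. UNIV). P u}. cyl J u)"
  proof safe
    fix \<omega> assume w: "\<omega> \<in> ev P"
    let ?u = "restrict (\<lambda>t. X t \<omega>) J"
    have "P ?u" using w locD[OF P, of "\<lambda>t. X t \<omega>" ?u] by (auto simp: ev_def)
    then have "?u \<in> {u \<in> PiE J (\<lambda>_. UNIV). P u}" by auto
    moreover have "\<omega> \<in> cyl J ?u" using w by (auto simp: cyl_def ev_def)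
    ultimately show "\<omega> \<in> (\<Union>u\<in>{u \<in> PiE J (\<lambda>_. UNIV). P u}. cyl J u)" by blast
  next
    fix \<omega> u assume "u \<in> PiE J (\<lambda>_. UNIV)" "P u" "\<omega> \<in> cyl J u"
    then show "\<omega> \<in> ev P" using locD[OF P, of u "\<lambda>t. X t \<omega>"] by (auto simp: cyl_def ev_def)
  qed
  have "countable {u \<in> PiE J (\<lambda>_. UNIV :: nat set). P u}"
    by (rule countable_subset[OF _ countable_PiE[OF J]]) auto
  then show ?thesis unfolding eq using cylS by (intro S.countable_UN') auto
qed

lemma ev_events:
  assumes "finite J" "J \<subseteq> {1..}" "loc J P"
  shows "ev P \<in> events"
  using assms by (intro ev_in_sigma[OF sets.sigma_algebra_axioms]) (auto intro!: X_pre)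

lemma prob_X_single: "s \<ge> 1 \<Longrightarrow> prob (X s -` {a} \<inter> space M) = (if a \<in> {1..d} then 1 / d else 0)"
proof -
  assume s: "s \<ge> 1"
  have "prob (X s -` {a} \<inter> space M) = measure (distr M (count_space UNIV) (X s)) {a}"
    using X_meas[OF s] by (simp add: measure_distr)
  also have "\<dots> = measure (measure_pmf (pmf_of_set {1..d})) {a}" using unif[OF s] by simp
  also have "\<dots> = (if a \<in> {1..d} then 1 / d else 0)"
    using d1 by (subst measure_pmf_of_set) auto
  finally show ?thesis .
qed

lemma prob_cyl:
  assumes J: "finite J" "J \<subseteq> {1..}" and u: "\<And>s. s \<in> J \<Longrightarrow> u s \<in> {1..d}"
  shows "prob (cyl J u) = (1 / d) ^ card J"
proof (cases "J = {}")
  case True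
  then have "cyl J u = space M" by (auto simp: cyl_def)
  then show ?thesis using True by (simp add: prob_space)
next
  case False
  have indS: "indep_sets (\<lambda>i. sigma_sets (space M) {X i -` A \<inter> space M | A. A \<in> sets (count_space UNIV)}) {1..}"
    using ind unfolding indep_vars_def by auto
  have "cyl J u = (\<Inter>s\<in>J. X s -` {u s} \<inter> space M)"
    using False by (auto simp: cyl_def)
  moreover have "prob (\<Inter>s\<in>J. X s -` {u s} \<inter> space M) = (\<Prod>s\<in>J. prob (X s -` {u s} \<inter> space M))"
    by (rule indep_setsD[OF indS]) (use False J in \<open>auto intro!: sigma_sets.Basic\<close>)
  ultimately have "prob (cyl J u) = (\<Prod>s\<in>J. prob (X s -` {u s} \<inter> space M))" by simp
  also have "\<dots> = (\<Prod>s\<in>J. 1 / d)"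
    using J u by (intro prod.cong) (auto simp: prob_X_single)
  finally show ?thesis by simp
qed

lemma prob_cyl_le: "finite J \<Longrightarrow> J \<subseteq> {1..} \<Longrightarrow> prob (cyl J u) \<ge> 0"
  by simp

end



context bins begin

lemma null_of_prob0: "A \<in> events \<Longrightarrow> prob A = 0 \<Longrightarrow> A \<in> null_sets M"
  by (intro null_setsI) (auto simp: emeasure_eq_measure)

lemma X_bad_null: "s \<ge> 1 \<Longrightarrow> X s -` (- {1..d}) \<inter> space M \<in> null_sets M"
proof -
  assume s: "s \<ge> 1"
  have "prob (X s -` (- {1..d}) \<inter> space M) = measure (distr M (count_space UNIV) (X s)) (- {1..d})"
    using X_meas[OF s] by (simp add: measure_distr)
  also have "\<dots> = measure (measure_pmf (pmf_of_set {1..d})) (- {1..d})" using unif[OF s] by simp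
  also have "\<dots> = 0" using d1 by (subst measure_pmf_of_set) auto
  finally show ?thesis using X_pre[OF s] by (intro null_of_prob0) auto
qed

lemma cyl_events:
  assumes J: "finite J" "J \<subseteq> {1..}"
  shows "cyl J u \<in> events"
proof -
  have "cyl J u = ev (\<lambda>x. \<forall>s\<in>J. x s = u s)" by (simp add: cyl_def ev_def)
  also have "\<dots> \<in> events" using J by (intro ev_events[of J]) (auto simp: loc_def)
  finally show ?thesis .
qed

lemma partition:
  assumes J: "finite J" "J \<subseteq> {1..}" and E: "E \<in> events"
  shows "prob E = (\<Sum>u\<in>PiE J (\<lambda>_. {1..d}). prob (E \<inter> cyl J u))"
proof -
  let ?W = "PiE J (\<lambda>_. {1..d})"
  define Bad where "Bad = (\<Union>s\<in>J. X s -` (- {1..d}) \<inter> space M)"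
  have nb: "X s -` (- {1..d}) \<inter> space M \<in> null_sets M" if "s \<in> J" for s
    using that J by (intro X_bad_null) auto
  have Bad: "Bad \<in> null_sets M"
    unfolding Bad_def using J nb by (intro null_sets.finite_UN) auto
  have cyl_ev: "cyl J u \<in> events" for u
  proof -
    have "cyl J u = ev (\<lambda>x. \<forall>s\<in>J. x s = u s)" by (simp add: cyl_def ev_def)
    also have "\<dots> \<in> events" using J by (intro ev_events[of J]) (auto simp: loc_def)
    finally show ?thesis .
  qed
  have eq: "E - Bad = (\<Union>u\<in>?W. E \<inter> cyl J u)"
  proof safe
    fix \<omega> assume w: "\<omega> \<in> E" "\<omega> \<notin> Bad"
    let ?u = "restrict (\<lambda>t. X t \<omega>) J"
    have "\<omega> \<in> space M" using w E sets.sets_into_space by auto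
    then have "?u \<in> ?W" using w by (auto simp: Bad_def)
    moreover have "\<omega> \<in> cyl J ?u" using \<open>\<omega> \<in> space M\<close> by (auto simp: cyl_def)
    ultimately show "\<omega> \<in> (\<Union>u\<in>?W. E \<inter> cyl J u)" using w by blast
  next
    fix \<omega> u assume "u \<in> ?W" "\<omega> \<in> cyl J u" "\<omega> \<in> Bad"
    then show False by (auto simp: Bad_def cyl_def)
  qed
  have disj: "disjoint_family_on (\<lambda>u. E \<inter> cyl J u) ?W"
    unfolding disjoint_family_on_def
  proof (intro ballI impI)
    fix u v assume uv: "u \<in> ?W" "v \<in> ?W" "u \<noteq> v"
    show "E \<inter> cyl J u \<inter> (E \<inter> cyl J v) = {}"
    proof (rule ccontr)
      assume "E \<inter> cyl J u \<inter> (E \<inter> cyl J v) \<noteq> {}"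
      then obtain \<omega> where "\<omega> \<in> cyl J u" "\<omega> \<in> cyl J v" by blast
      then have "\<And>s. s \<in> J \<Longrightarrow> u s = v s" by (auto simp: cyl_def)
      then have "u = v" using uv by (intro extensionalityI[of _ J]) (auto simp: PiE_iff)
      then show False using uv by simp
    qed
  qed
  have "prob E = prob (E - Bad)" using E Bad by (simp add: measure_Diff_null_set)
  also have "\<dots> = (\<Sum>u\<in>?W. prob (E \<inter> cyl J u))"
    unfolding eq using J E cyl_ev disj
    by (intro finite_measure_finite_Union) (auto intro!: finite_PiE)
  finally show ?thesis .
qed

lemma prob_ev_count:
  assumes J: "finite J" "J \<subseteq> {1..}" and P: "loc J P"
  shows "prob (ev P) = card {u \<in> PiE J (\<lambda>_. {1..d}). P u} * (1 / d) ^ card J"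
proof -
  let ?W = "PiE J (\<lambda>_. {1..d})"
  have "prob (ev P) = (\<Sum>u\<in>?W. prob (ev P \<inter> cyl J u))"
    using J P by (intro partition ev_events) auto
  also have "\<dots> = (\<Sum>u\<in>?W. if P u then (1 / d) ^ card J else 0)"
  proof (intro sum.cong refl)
    fix u assume u: "u \<in> ?W"
    have "P (\<lambda>t. X t \<omega>) = P u" if "\<omega> \<in> cyl J u" for \<omega>
      using that by (intro locD[OF P]) (auto simp: cyl_def)
    then have "ev P \<inter> cyl J u = (if P u then cyl J u else {})"
      by (auto simp: ev_def cyl_def)
    moreover have "prob (cyl J u) = (1 / d) ^ card J"
      using u J by (intro prob_cyl) (auto simp: PiE_iff)
    ultimately show "prob (ev P \<inter> cyl J u) = (if P u then (1 / d) ^ card J else 0)"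
      by simp
  qed
  also have "\<dots> = card {u \<in> ?W. P u} * (1 / d) ^ card J"
    using J by (simp add: sum.inter_filter[symmetric] finite_PiE)
  finally show ?thesis .
qed

lemma ext_lower:
  assumes C: "loc {1..r} C" and G: "loc {1..r+L} G"
    and pats: "\<And>u. u \<in> PiE {1..r} (\<lambda>_. {1..d}) \<Longrightarrow> C u \<Longrightarrow>
       \<exists>w. (\<forall>q\<in>{1..L}. w q \<in> {1..d}) \<and>
           (\<forall>x. (\<forall>s\<in>{1..r}. x s = u s) \<longrightarrow> (\<forall>q\<in>{1..L}. x (r+q) = w q) \<longrightarrow> G x)"
  shows "prob (ev (\<lambda>x. C x \<and> G x)) \<ge> (1 / d) ^ L * prob (ev C)"
proof -
  let ?W = "PiE {1..r} (\<lambda>_. {1..d})"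
  have CG: "loc {1..r+L} (\<lambda>x. C x \<and> G x)"
    by (intro loc_conj G loc_mono[OF C]) auto
  have evCG: "ev (\<lambda>x. C x \<and> G x) \<in> events" by (rule ev_events[OF _ _ CG]) auto
  have "prob (ev (\<lambda>x. C x \<and> G x)) = (\<Sum>u\<in>?W. prob (ev (\<lambda>x. C x \<and> G x) \<inter> cyl {1..r} u))"
    by (rule partition[OF _ _ evCG]) auto
  also have "\<dots> \<ge> (\<Sum>u\<in>?W. if C u then (1 / d) ^ (r + L) else 0)"
  proof (intro sum_mono)
    fix u assume u: "u \<in> ?W"
    show "(if C u then (1 / d) ^ (r + L) else 0) \<le> prob (ev (\<lambda>x. C x \<and> G x) \<inter> cyl {1..r} u)"
    proof (cases "C u")
      case True
      obtain w where w: "\<forall>q\<in>{1..L}. w q \<in> {1..d}"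
        "\<forall>x. (\<forall>s\<in>{1..r}. x s = u s) \<longrightarrow> (\<forall>q\<in>{1..L}. x (r+q) = w q) \<longrightarrow> G x"
        using pats[OF u True] by blast
      define v where "v s = (if s \<le> r then u s else w (s - r))" for s
      have vd: "v s \<in> {1..d}" if "s \<in> {1..r+L}" for s
      proof (cases "s \<le> r")
        case True
        then show ?thesis using that u by (auto simp: v_def PiE_iff)
      next
        case False
        then have "s - r \<in> {1..L}" using that by auto
        then show ?thesis using w(1) False by (auto simp: v_def)
      qed
      have sub: "cyl {1..r+L} v \<subseteq> ev (\<lambda>x. C x \<and> G x) \<inter> cyl {1..r} u"
      proof
        fix \<omega> assume om: "\<omega> \<in> cyl {1..r+L} v"
        then have om1: "\<forall>s\<in>{1..r}. X s \<omega> = u s" by (auto simp: cyl_def v_def)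
        have om2: "\<forall>q\<in>{1..L}. X (r+q) \<omega> = w q"
        proof
          fix q assume "q \<in> {1..L}"
          then have "r + q \<in> {1..r+L}" "\<not> r + q \<le> r" by auto
          then show "X (r+q) \<omega> = w q" using om by (auto simp: cyl_def v_def)
        qed
        have "C (\<lambda>t. X t \<omega>)" using locD[OF C, of "\<lambda>t. X t \<omega>" u] om1 True by auto
        moreover have "G (\<lambda>t. X t \<omega>)"
          using w(2)[rule_format, of "\<lambda>t. X t \<omega>"] om1 om2 by blast
        ultimately show "\<omega> \<in> ev (\<lambda>x. C x \<and> G x) \<inter> cyl {1..r} u"
          using om om1 by (auto simp: ev_def cyl_def)
      qed
      have "(1 / d) ^ (r + L) = prob (cyl {1..r+L} v)"
        using vd by (subst prob_cyl) auto
      also have "\<dots> \<le> prob (ev (\<lambda>x. C x \<and> G x) \<inter> cyl {1..r} u)"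
        using sub evCG cyl_events[of "{1..r}" u] by (intro finite_measure_mono) auto
      finally show ?thesis using True by simp
    qed simp
  qed
  also have "(\<Sum>u\<in>?W. if C u then (1 / d) ^ (r + L) else 0) = card {u \<in> ?W. C u} * (1 / d) ^ (r + L)"
    by (simp add: sum.inter_filter[symmetric] finite_PiE)
  also have "\<dots> = (1 / d) ^ L * (card {u \<in> ?W. C u} * (1 / d) ^ r)"
    by (simp add: power_add)
  also have "card {u \<in> ?W. C u} * (1 / d) ^ r = prob (ev C)"
    using prob_ev_count[OF _ _ C] by simp
  finally show ?thesis .
qed

end



definition nxt :: "(nat \<Rightarrow> (nat \<Rightarrow> nat) \<Rightarrow> bool) \<Rightarrow> nat \<Rightarrow> (nat \<Rightarrow> nat) \<Rightarrow> nat option" where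
  "nxt H a x = (if \<exists>s\<ge>a. H s x then Some (LEAST s. a \<le> s \<and> H s x) else None)"

fun st :: "(nat \<Rightarrow> (nat \<Rightarrow> nat) \<Rightarrow> bool) \<Rightarrow> nat \<Rightarrow> nat \<Rightarrow> nat \<Rightarrow> (nat \<Rightarrow> nat) \<Rightarrow> nat option" where
  "st H L n 0 x = nxt H n x"
| "st H L n (Suc k) x = (case st H L n k x of None \<Rightarrow> None | Some r \<Rightarrow> nxt H (r + L + 1) x)"

definition Ek :: "(nat \<Rightarrow> (nat \<Rightarrow> nat) \<Rightarrow> bool) \<Rightarrow> (nat \<Rightarrow> (nat \<Rightarrow> nat) \<Rightarrow> bool) \<Rightarrow> nat \<Rightarrow> nat \<Rightarrow> nat \<Rightarrow> (nat \<Rightarrow> nat) \<Rightarrow> bool" where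
  "Ek H G L n k x \<longleftrightarrow> (\<forall>k'<k. \<exists>r. st H L n k' x = Some r \<and> \<not> G r x)"

lemma nxt_SomeD:
  assumes "nxt H a x = Some r"
  shows "a \<le> r" "H r x" "\<And>s. a \<le> s \<Longrightarrow> s < r \<Longrightarrow> \<not> H s x"
proof -
  have ex: "\<exists>s. a \<le> s \<and> H s x" and r: "r = (LEAST s. a \<le> s \<and> H s x)"
    using assms by (auto simp: nxt_def split: if_splits)
  show "a \<le> r" "H r x" using LeastI_ex[OF ex] r by auto
  show "\<not> H s x" if "a \<le> s" "s < r" for s
    using not_less_Least[of s "\<lambda>s. a \<le> s \<and> H s x"] that r by auto
qed

lemma nxt_local:
  assumes locH: "\<And>s. loc {1..s} (H s)" and nx: "nxt H a x = Some r"
    and agree: "\<And>s. s \<in> {1..r} \<Longrightarrow> x s = y s"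
  shows "nxt H a y = Some r"
proof -
  have Hr: "H r y" using nxt_SomeD(2)[OF nx] locD[OF locH[of r], of x y] agree by simp
  have nH: "\<not> H s y" if "a \<le> s" "s < r" for s
    using nxt_SomeD(3)[OF nx that] locD[OF locH[of s], of x y] agree that by simp
  have ar: "a \<le> r" using nxt_SomeD(1)[OF nx] .
  have "(LEAST s. a \<le> s \<and> H s y) = r"
  proof (rule Least_equality)
    show "a \<le> r \<and> H r y" using ar Hr by simp
    fix s assume "a \<le> s \<and> H s y"
    then show "r \<le> s" using nH by (meson not_le)
  qed
  then show ?thesis using ar Hr by (auto simp: nxt_def)
qed

lemma nxt_INFM: "(\<exists>\<^sub>\<infinity>s. H s x) \<Longrightarrow> nxt H a x \<noteq> None"
  by (auto simp: nxt_def INFM_nat_le)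

lemma st_SomeD:
  assumes "st H L n k x = Some r" shows "n \<le> r" "H r x"
  using assms
proof (induction k arbitrary: r)
  case 0
  { case 1 then show ?case using nxt_SomeD(1) by simp }
  { case 2 then show ?case using nxt_SomeD(2) by simp }
next
  case (Suc k)
  { case 1
    then obtain r0 where r0: "st H L n k x = Some r0" "nxt H (r0 + L + 1) x = Some r"
      by (auto split: option.splits)
    then show ?case using Suc.IH(1)[OF r0(1)] nxt_SomeD(1)[OF r0(2)] by simp }
  { case 2
    then obtain r0 where r0: "st H L n k x = Some r0" "nxt H (r0 + L + 1) x = Some r"
      by (auto split: option.splits)
    then show ?case using nxt_SomeD(2)[OF r0(2)] by simp }
qed

lemma st_INFM: "(\<exists>\<^sub>\<infinity>s. H s x) \<Longrightarrow> st H L n k x \<noteq> None"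
proof (induction k)
  case 0 then show ?case using nxt_INFM by simp
next
  case (Suc k)
  then obtain r0 where "st H L n k x = Some r0" by auto
  then show ?case using nxt_INFM[of H x, OF Suc.prems] by simp
qed

lemma st_local:
  assumes locH: "\<And>s. loc {1..s} (H s)"
  shows "st H L n k x = Some r \<Longrightarrow> (\<And>s. s \<in> {1..r} \<Longrightarrow> x s = y s) \<Longrightarrow>
    st H L n k y = Some r \<and> (\<forall>k'<k. st H L n k' y = st H L n k' x \<and> (\<exists>r'. st H L n k' x = Some r' \<and> r' + L < r))"
proof (induction k arbitrary: r)
  case 0
  have "nxt H n x = Some r" using "0.prems"(1) by simp
  then have "nxt H n y = Some r" by (rule nxt_local[OF locH _ "0.prems"(2)])
  then show ?case by simp
next
  case (Suc k)
  obtain r0 where r0: "st H L n k x = Some r0" "nxt H (r0 + L + 1) x = Some r"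
    using Suc.prems(1) by (auto split: option.splits)
  have lt: "r0 + L < r" using nxt_SomeD(1)[OF r0(2)] by simp
  have ag0: "\<And>s. s \<in> {1..r0} \<Longrightarrow> x s = y s" using Suc.prems(2) lt by simp
  have IH: "st H L n k y = Some r0 \<and> (\<forall>k'<k. st H L n k' y = st H L n k' x \<and> (\<exists>r'. st H L n k' x = Some r' \<and> r' + L < r0))"
    by (rule Suc.IH[OF r0(1) ag0])
  have "nxt H (r0 + L + 1) y = Some r" by (rule nxt_local[OF locH r0(2) Suc.prems(2)])
  then have A: "st H L n (Suc k) y = Some r" using IH by simp
  have B: "st H L n k' y = st H L n k' x \<and> (\<exists>r'. st H L n k' x = Some r' \<and> r' + L < r)" if k': "k' < Suc k" for k'
  proof (cases "k' = k")
    case True then show ?thesis using IH r0(1) lt by simp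
  next
    case False
    then have "k' < k" using k' by simp
    then have h: "st H L n k' y = st H L n k' x" "\<exists>r'. st H L n k' x = Some r' \<and> r' + L < r0"
      using IH by blast+
    from h(2) obtain r' where "st H L n k' x = Some r'" "r' + L < r0" by blast
    then show ?thesis using h(1) lt by simp
  qed
  show ?case using A B by blast
qed

definition Ck where "Ck H G L n k r x \<longleftrightarrow> Ek H G L n k x \<and> st H L n k x = Some r"

lemma Ck_transfer:
  assumes locH: "\<And>s. loc {1..s} (H s)" and locG: "\<And>s. loc {1..s+L} (G s)"
    and C: "Ck H G L n k r x" and agree: "\<And>s. s \<in> {1..r} \<Longrightarrow> x s = y s"
  shows "Ck H G L n k r y"
proof -
  have sx: "st H L n k x = Some r" and ex: "Ek H G L n k x" using C by (auto simp: Ck_def)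
  note SL = st_local[OF locH sx agree]
  have "Ek H G L n k y" unfolding Ek_def
  proof (intro allI impI)
    fix k' assume k': "k' < k"
    obtain r' where r': "st H L n k' x = Some r'" "\<not> G r' x" using ex k' by (auto simp: Ek_def)
    have "r' + L < r" using SL k' r'(1) by auto
    then have "G r' x = G r' y" using agree by (intro locD[OF locG[of r']]) auto
    then show "\<exists>r. st H L n k' y = Some r \<and> \<not> G r y" using SL k' r' by auto
  qed
  then show ?thesis using SL by (simp add: Ck_def)
qed

lemma loc_Ck:
  assumes locH: "\<And>s. loc {1..s} (H s)" and locG: "\<And>s. loc {1..s+L} (G s)"
  shows "loc {1..r} (Ck H G L n k r)"
  unfolding loc_def
proof (intro allI impI)
  fix x y :: "nat \<Rightarrow> nat" assume a: "\<forall>s\<in>{1..r}. x s = y s"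
  show "Ck H G L n k r x = Ck H G L n k r y"
    using Ck_transfer[OF locH locG, of n k r x y] Ck_transfer[OF locH locG, of n k r y x] a by auto
qed

lemma Ek_Suc: "Ek H G L n (Suc k) x \<longleftrightarrow> (\<exists>r. Ck H G L n k r x \<and> \<not> G r x)"
  unfolding Ck_def Ek_def by (auto simp: less_Suc_eq)

lemma Ck_H: "Ck H G L n k r x \<Longrightarrow> H r x"
  unfolding Ck_def using st_SomeD(2) by blast

lemma Ek_all:
  assumes "\<exists>\<^sub>\<infinity>s. H s x" "\<forall>s\<ge>n. \<not> G s x"
  shows "Ek H G L n k x"
  unfolding Ek_def
proof (intro allI impI)
  fix k' assume "k' < k"
  obtain r where r: "st H L n k' x = Some r" using st_INFM[of H x, OF assms(1)] by blast
  then show "\<exists>r. st H L n k' x = Some r \<and> \<not> G r x" using st_SomeD(1)[OF r] assms(2) by auto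
qed

context bins begin

lemma cond_bc:
  assumes locH: "\<And>s. loc {1..s} (H s)" and locG: "\<And>s. loc {1..s+L} (G s)"
    and p: "0 < p" "p \<le> 1"
    and step: "\<And>s C. loc {1..s} C \<Longrightarrow> (\<And>x. C x \<Longrightarrow> H s x) \<Longrightarrow>
                 prob (ev (\<lambda>x. C x \<and> \<not> G s x)) \<le> (1 - p) * prob (ev C)"
  shows "AE \<omega> in M. (\<exists>\<^sub>\<infinity>s. H s (\<lambda>t. X t \<omega>)) \<longrightarrow> (\<exists>\<^sub>\<infinity>s. G s (\<lambda>t. X t \<omega>))"
proof -
  have main: "AE \<omega> in M. \<not> ((\<exists>\<^sub>\<infinity>s. H s (\<lambda>t. X t \<omega>)) \<and> (\<forall>s\<ge>n. \<not> G s (\<lambda>t. X t \<omega>)))" for n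
  proof -
    let ?C = "\<lambda>k r. Ck H G L n k r"
    let ?E = "\<lambda>k. Ek H G L n k"
    have locC: "loc {1..r} (?C k r)" for k r by (rule loc_Ck[OF locH locG])
    have evC: "ev (?C k r) \<in> events" for k r by (rule ev_events[OF _ _ locC]) auto
    have locCG: "loc {1..r+L} (\<lambda>x. ?C k r x \<and> \<not> G r x)" for k r
      by (intro loc_conj loc_not locG loc_mono[OF locC]) auto
    have evCG: "ev (\<lambda>x. ?C k r x \<and> \<not> G r x) \<in> events" for k r
      by (rule ev_events[OF _ _ locCG]) auto
    have evE_Suc: "ev (?E (Suc k)) = (\<Union>r. ev (\<lambda>x. ?C k r x \<and> \<not> G r x))" for k
      by (auto simp: ev_def Ek_Suc)
    have evE: "ev (?E k) \<in> events" for k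
    proof (cases k)
      case 0
      then have "ev (?E k) = space M" by (auto simp: ev_def Ek_def)
      then show ?thesis by simp
    next
      case (Suc k')
      have "ev (?E (Suc k')) \<in> events" unfolding evE_Suc using evCG by (intro sets.countable_UN) auto
      then show ?thesis using Suc by simp
    qed
    have disjC: "disjoint_family (\<lambda>r. ev (?C k r))" for k
      unfolding disjoint_family_on_def by (auto simp: ev_def Ck_def)
    have disjCG: "disjoint_family (\<lambda>r. ev (\<lambda>x. ?C k r x \<and> \<not> G r x))" for k
      unfolding disjoint_family_on_def by (auto simp: ev_def Ck_def)
    have bound: "prob (ev (?E k)) \<le> (1 - p) ^ k" for k
    proof (induction k)
      case 0
      have "ev (?E 0) = space M" by (auto simp: ev_def Ek_def)
      then show ?case by (simp add: prob_space)
    next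
      case (Suc k)
      have s1: "(\<lambda>r. prob (ev (\<lambda>x. ?C k r x \<and> \<not> G r x))) sums prob (\<Union>r. ev (\<lambda>x. ?C k r x \<and> \<not> G r x))"
        using evCG disjCG by (intro finite_measure_UNION) auto
      have s2: "(\<lambda>r. prob (ev (?C k r))) sums prob (\<Union>r. ev (?C k r))"
        using evC disjC by (intro finite_measure_UNION) auto
      have "prob (ev (?E (Suc k))) = prob (\<Union>r. ev (\<lambda>x. ?C k r x \<and> \<not> G r x))"
        by (simp add: evE_Suc)
      also have "\<dots> \<le> (1 - p) * prob (\<Union>r. ev (?C k r))"
      proof (rule sums_le[OF _ s1 sums_mult[OF s2]])
        fix r show "prob (ev (\<lambda>x. ?C k r x \<and> \<not> G r x)) \<le> (1 - p) * prob (ev (?C k r))"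
          by (rule step[OF locC]) (rule Ck_H)
      qed
      also have "\<dots> \<le> (1 - p) * prob (ev (?E k))"
      proof (intro mult_left_mono finite_measure_mono)
        show "(\<Union>r. ev (?C k r)) \<subseteq> ev (?E k)" by (auto simp: ev_def Ck_def)
      qed (use p evE in auto)
      also have "\<dots> \<le> (1 - p) * (1 - p) ^ k"
        using Suc.IH p by (intro mult_left_mono) auto
      finally show ?case by simp
    qed
    let ?I = "\<Inter>k. ev (?E k)"
    have evI: "?I \<in> events" using evE by auto
    have I0: "prob ?I = 0"
    proof (rule ccontr)
      assume "prob ?I \<noteq> 0"
      then have pos: "prob ?I > 0" using measure_nonneg[of M ?I] by linarith
      obtain k where k: "(1 - p) ^ k < prob ?I" using real_arch_pow_inv[OF pos, of "1 - p"] p by auto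
      have "prob ?I \<le> prob (ev (?E k))" using evE by (intro finite_measure_mono) auto
      then show False using bound[of k] k by simp
    qed
    have "AE \<omega> in M. \<omega> \<notin> ?I" using null_of_prob0[OF evI I0] by (rule AE_not_in)
    then show ?thesis
    proof (rule AE_mp, intro AE_I2 impI)
      fix \<omega> assume om: "\<omega> \<in> space M" "\<omega> \<notin> ?I"
      show "\<not> ((\<exists>\<^sub>\<infinity>s. H s (\<lambda>t. X t \<omega>)) \<and> (\<forall>s\<ge>n. \<not> G s (\<lambda>t. X t \<omega>)))"
      proof
        assume h: "(\<exists>\<^sub>\<infinity>s. H s (\<lambda>t. X t \<omega>)) \<and> (\<forall>s\<ge>n. \<not> G s (\<lambda>t. X t \<omega>))"
        then have "\<omega> \<in> ?I" using om(1) Ek_all[of H _ n G L] by (auto simp: ev_def)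
        then show False using om(2) by simp
      qed
    qed
  qed
  then have "AE \<omega> in M. \<forall>n. \<not> ((\<exists>\<^sub>\<infinity>s. H s (\<lambda>t. X t \<omega>)) \<and> (\<forall>s\<ge>n. \<not> G s (\<lambda>t. X t \<omega>)))"
    by (subst AE_all_countable) (use main in blast)
  then show ?thesis
    by (rule AE_mp) (auto intro!: AE_I2 simp: INFM_nat_le)
qed

end



lemma near_shift_iff:
  "(\<exists>m. \<exists>\<^sub>\<infinity>t. near d m i x t \<and> near d m j x t) \<longleftrightarrow> (\<exists>m. \<exists>\<^sub>\<infinity>t. nearf d n m i x t \<and> nearf d n m j x t)"
proof
  assume "\<exists>m. \<exists>\<^sub>\<infinity>t. near d m i x t \<and> near d m j x t"
  then obtain m where m: "\<forall>a. \<exists>t\<ge>a. near d m i x t \<and> near d m j x t" by (auto simp: INFM_nat_le)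
  have "\<forall>a. \<exists>t\<ge>a. nearf d n (m+n) i x t \<and> nearf d n (m+n) j x t"
  proof
    fix a obtain t where "t \<ge> max a n" "near d m i x t \<and> near d m j x t" using m by blast
    then show "\<exists>t\<ge>a. nearf d n (m+n) i x t \<and> nearf d n (m+n) j x t"
      using near_nearf[of n t d m] by (intro exI[of _ t]) auto
  qed
  then show "\<exists>m. \<exists>\<^sub>\<infinity>t. nearf d n m i x t \<and> nearf d n m j x t" by (auto simp: INFM_nat_le)
next
  assume "\<exists>m. \<exists>\<^sub>\<infinity>t. nearf d n m i x t \<and> nearf d n m j x t"
  then obtain m where m: "\<forall>a. \<exists>t\<ge>a. nearf d n m i x t \<and> nearf d n m j x t" by (auto simp: INFM_nat_le)
  have "\<forall>a. \<exists>t\<ge>a. near d (m+n) i x t \<and> near d (m+n) j x t"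
  proof
    fix a obtain t where "t \<ge> max a n" "nearf d n m i x t \<and> nearf d n m j x t" using m by blast
    then show "\<exists>t\<ge>a. near d (m+n) i x t \<and> near d (m+n) j x t"
      using nearf_near[of n t d m] by (intro exI[of _ t]) auto
  qed
  then show "\<exists>m. \<exists>\<^sub>\<infinity>t. near d m i x t \<and> near d m j x t" by (auto simp: INFM_nat_le)
qed

context bins begin

definition gsig :: "nat \<Rightarrow> 'a set set" where
  "gsig s = sigma_sets (space M) {X s -` A \<inter> space M | A. A \<in> sets (count_space UNIV)}"

lemma indS: "indep_sets gsig {1..}"
  using ind unfolding indep_vars_def gsig_def by auto

lemma indF: "indep_sets (\<lambda>k. gsig (Suc k)) UNIV"
proof (rule indep_setsI)
  fix i :: nat show "gsig (Suc i) \<subseteq> events" using indS unfolding indep_sets_def by auto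
next
  fix A :: "nat \<Rightarrow> 'a set" and J :: "nat set"
  assume J: "J \<noteq> {}" "J \<subseteq> UNIV" "finite J" and A: "\<forall>j\<in>J. A j \<in> gsig (Suc j)"
  have "prob (\<Inter>s\<in>Suc ` J. A (s - 1)) = (\<Prod>s\<in>Suc ` J. prob (A (s - 1)))"
    by (rule indep_setsD[OF indS]) (use J A in auto)
  moreover have "(\<Inter>s\<in>Suc ` J. A (s - 1)) = (\<Inter>j\<in>J. A j)" by auto
  moreover have "(\<Prod>s\<in>Suc ` J. prob (A (s - 1))) = (\<Prod>j\<in>J. prob (A j))"
    by (simp add: prod.reindex)
  ultimately show "prob (\<Inter>j\<in>J. A j) = (\<Prod>j\<in>J. prob (A j))" by simp
qed

lemma tail01:
  "prob (ev (\<lambda>x. \<exists>m. \<exists>\<^sub>\<infinity>t. near d m i x t \<and> near d m j x t)) = 0 \<or>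
   prob (ev (\<lambda>x. \<exists>m. \<exists>\<^sub>\<infinity>t. near d m i x t \<and> near d m j x t)) = 1"
proof (rule kolmogorov_0_1_law[of "\<lambda>k. gsig (Suc k)"])
  fix k :: nat show "sigma_algebra (space M) (gsig (Suc k))"
    unfolding gsig_def by (rule sigma_algebra_sigma_sets) auto
next
  show "indep_sets (\<lambda>k. gsig (Suc k)) UNIV" by (rule indF)
next
  let ?V = "ev (\<lambda>x. \<exists>m. \<exists>\<^sub>\<infinity>t. near d m i x t \<and> near d m j x t)"
  have "?V \<in> sigma_sets (space M) (\<Union> ((\<lambda>k. gsig (Suc k)) ` {n..}))" for n
  proof -
    let ?S = "sigma_sets (space M) (\<Union> ((\<lambda>k. gsig (Suc k)) ` {n..}))"
    have sub: "\<Union> ((\<lambda>k. gsig (Suc k)) ` {n..}) \<subseteq> Pow (space M)"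
    proof -
      have "gsig s \<subseteq> Pow (space M)" for s
        unfolding gsig_def by (intro subsetI PowI sigma_sets_into_sp[of _ "space M"]) auto
      then show ?thesis by blast
    qed
    interpret S: sigma_algebra "space M" ?S by (rule sigma_algebra_sigma_sets[OF sub])
    have gen: "X s -` {a} \<inter> space M \<in> ?S" if s: "s \<in> {Suc n..t}" for s t a
    proof -
      have "X s -` {a} \<inter> space M \<in> gsig s" unfolding gsig_def by (intro sigma_sets.Basic) auto
      moreover have "s = Suc (s - 1)" "s - 1 \<in> {n..}" using s by auto
      ultimately have "X s -` {a} \<inter> space M \<in> \<Union> ((\<lambda>k. gsig (Suc k)) ` {n..})" by (metis UN_I)
      then show ?thesis by (rule sigma_sets.Basic)
    qed
    let ?Q = "\<lambda>m t x. nearf d n m i x t \<and> nearf d n m j x t"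
    have evQ: "ev (?Q m t) \<in> ?S" for m t
      by (rule ev_in_sigma[OF S.sigma_algebra_axioms, of "{Suc n..t}"])
         (auto intro: gen loc_conj loc_nearf)
    have "?V = ev (\<lambda>x. \<exists>m. \<exists>\<^sub>\<infinity>t. ?Q m t x)"
      unfolding ev_def using near_shift_iff[of d i _ j n] by simp
    also have "\<dots> = (\<Union>m. \<Inter>a. \<Union>t\<in>{a..}. ev (?Q m t))"
      by (auto simp: ev_def INFM_nat_le Bex_def atLeast_iff; blast)
    also have "\<dots> \<in> ?S" using evQ by (intro S.countable_UN S.countable_INT) auto
    finally show ?thesis .
  qed
  then show "?V \<in> tail_events (\<lambda>k. gsig (Suc k))" by (simp add: tail_events_def)
qed

end



definition swp :: "nat \<Rightarrow> nat \<Rightarrow> nat \<Rightarrow> nat" where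
  "swp a b y = (if y = a then b else if y = b then a else y)"

lemma swp_swp [simp]: "swp a b (swp a b y) = y"
  by (simp add: swp_def)

lemma swp_in: "a \<in> {1..d} \<Longrightarrow> b \<in> {1..d} \<Longrightarrow> y \<in> {1..d} \<Longrightarrow> swp a b y \<in> {1..(d::nat)}"
  by (simp add: swp_def)

lemma cnt_comp:
  assumes "\<And>y. \<tau> (\<sigma> y) = y" "\<And>y. \<sigma> (\<tau> y) = y"
  shows "cnt (\<lambda>s. \<sigma> (x s)) a t = cnt x (\<tau> a) t"
  unfolding cnt_def by (intro arg_cong[where f=card]) (metis assms)

lemma tie_comp:
  assumes inv: "\<And>y. \<tau> (\<sigma> y) = y" "\<And>y. \<sigma> (\<tau> y) = y"
    and sd: "\<And>y. y \<in> {1..d} \<Longrightarrow> \<sigma> y \<in> {1..d}" and td: "\<And>y. y \<in> {1..d} \<Longrightarrow> \<tau> y \<in> {1..d}"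
  shows "tie d i j (\<lambda>s. \<sigma> (x s)) t \<longleftrightarrow> tie d (\<tau> i) (\<tau> j) x t"
proof -
  have c: "cnt (\<lambda>s. \<sigma> (x s)) a t = cnt x (\<tau> a) t" for a by (rule cnt_comp[OF inv])
  have "(\<forall>l\<in>{1..d}. cnt x (\<tau> l) t \<le> cnt x (\<tau> j) t) \<longleftrightarrow> (\<forall>l\<in>{1..d}. cnt x l t \<le> cnt x (\<tau> j) t)"
  proof
    assume h: "\<forall>l\<in>{1..d}. cnt x (\<tau> l) t \<le> cnt x (\<tau> j) t"
    show "\<forall>l\<in>{1..d}. cnt x l t \<le> cnt x (\<tau> j) t"
    proof
      fix l assume l: "l \<in> {1..d}"
      have "cnt x (\<tau> (\<sigma> l)) t \<le> cnt x (\<tau> j) t" using h sd[OF l] by blast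
      then show "cnt x l t \<le> cnt x (\<tau> j) t" using inv(1) by simp
    qed
  next
    assume h: "\<forall>l\<in>{1..d}. cnt x l t \<le> cnt x (\<tau> j) t"
    then show "\<forall>l\<in>{1..d}. cnt x (\<tau> l) t \<le> cnt x (\<tau> j) t" using td by blast
  qed
  then show ?thesis unfolding tie_def c by simp
qed

lemma loc_Ex_tie: "loc {1..T} (\<lambda>x. \<exists>t\<in>{n..T}. Q t x)" if "\<And>t. loc {1..t} (Q t)"
  unfolding loc_def
proof (intro allI impI)
  fix x y :: "nat \<Rightarrow> nat" assume a: "\<forall>s\<in>{1..T}. x s = y s"
  have "Q t x = Q t y" if "t \<in> {n..T}" for t
    using that a by (intro locD[OF \<open>\<And>t. loc {1..t} (Q t)\<close>]) auto
  then show "(\<exists>t\<in>{n..T}. Q t x) = (\<exists>t\<in>{n..T}. Q t y)" by auto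
qed

context bins begin

lemma ev_INFM_events:
  assumes "\<And>t. loc {1..t} (Q t)"
  shows "ev (\<lambda>x. \<exists>\<^sub>\<infinity>t. Q t x) \<in> events"
proof -
  have evQ: "ev (Q t) \<in> events" for t by (rule ev_events[OF _ _ assms]) auto
  have "ev (\<lambda>x. \<exists>\<^sub>\<infinity>t. Q t x) = (\<Inter>a. \<Union>t\<in>{a..}. ev (Q t))"
    by (auto simp: ev_def INFM_nat_le Bex_def atLeast_iff)
  also have "\<dots> \<in> events" using evQ by auto
  finally show ?thesis .
qed

lemma ev_ex_INFM_events:
  fixes Q :: "nat \<Rightarrow> nat \<Rightarrow> (nat \<Rightarrow> nat) \<Rightarrow> bool"
  assumes "\<And>m t. loc {1..t} (Q m t)"
  shows "ev (\<lambda>x. \<exists>m. \<exists>\<^sub>\<infinity>t. Q m t x) \<in> events"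
proof -
  have evQ: "ev (\<lambda>x. \<exists>\<^sub>\<infinity>t. Q m t x) \<in> events" for m by (rule ev_INFM_events[OF assms])
  have "ev (\<lambda>x. \<exists>m. \<exists>\<^sub>\<infinity>t. Q m t x) = (\<Union>m. ev (\<lambda>x. \<exists>\<^sub>\<infinity>t. Q m t x))"
    by (auto simp: ev_def)
  also have "\<dots> \<in> events" using evQ by (intro sets.countable_UN) auto
  finally show ?thesis .
qed

lemma catchup:
  assumes ij: "i \<in> {1..d}" "j \<in> {1..d}"
  shows "AE \<omega> in M. (\<exists>m. \<exists>\<^sub>\<infinity>t. near d m i (\<lambda>t. X t \<omega>) t \<and> near d m j (\<lambda>t. X t \<omega>) t)
                      \<longrightarrow> (\<exists>\<^sub>\<infinity>t. tie d i j (\<lambda>t. X t \<omega>) t)"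
proof -
  have one: "AE \<omega> in M. (\<exists>\<^sub>\<infinity>t. near d m i (\<lambda>t. X t \<omega>) t \<and> near d m j (\<lambda>t. X t \<omega>) t)
                      \<longrightarrow> (\<exists>\<^sub>\<infinity>t. tie d i j (\<lambda>t. X t \<omega>) t)" for m
  proof -
    define H where "H s x = (near d m i x s \<and> near d m j x s)" for s x
    define G where "G s x = (\<exists>t\<in>{s..s+2*m}. tie d i j x t)" for s x
    define p :: real where "p = (1 / d) ^ (2*m)"
    have locH: "loc {1..s} (H s)" for s unfolding H_def by (intro loc_conj loc_near)
    have locG: "loc {1..s+2*m} (G s)" for s
      unfolding loc_def G_def
    proof (intro allI impI)
      fix x y :: "nat \<Rightarrow> nat" assume a: "\<forall>r\<in>{1..s+2*m}. x r = y r"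
      have "tie d i j x t = tie d i j y t" if "t \<in> {s..s+2*m}" for t
        using that a by (intro locD[OF loc_tie]) auto
      then show "(\<exists>t\<in>{s..s+2*m}. tie d i j x t) = (\<exists>t\<in>{s..s+2*m}. tie d i j y t)" by auto
    qed
    have p: "0 < p" "p \<le> 1" using d1 by (auto simp: p_def power_le_one)
    have step: "prob (ev (\<lambda>x. C x \<and> \<not> G s x)) \<le> (1 - p) * prob (ev C)"
      if C: "loc {1..s} C" and CH: "\<And>x. C x \<Longrightarrow> H s x" for s C
    proof -
      have low: "prob (ev (\<lambda>x. C x \<and> G s x)) \<ge> p * prob (ev C)"
        unfolding p_def
      proof (rule ext_lower[OF C locG])
        fix u assume u: "u \<in> PiE {1..s} (\<lambda>_. {1..d})" "C u"
        define Mx where "Mx = Max ((\<lambda>l. cnt u l s) ` {1..d})"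
        define a where "a = Mx - cnt u i s"
        define w where "w q = (if q \<le> a then i else j)" for q
        show "\<exists>w. (\<forall>q\<in>{1..2*m}. w q \<in> {1..d}) \<and>
           (\<forall>x. (\<forall>r\<in>{1..s}. x r = u r) \<longrightarrow> (\<forall>q\<in>{1..2*m}. x (s+q) = w q) \<longrightarrow> G s x)"
        proof (intro exI conjI allI impI)
          show "\<forall>q\<in>{1..2*m}. w q \<in> {1..d}" using ij by (auto simp: w_def)
          fix x assume xu: "\<forall>r\<in>{1..s}. x r = u r" and xw: "\<forall>q\<in>{1..2*m}. x (s+q) = w q"
          have cx: "cnt x l s = cnt u l s" for l using xu by (intro cnt_local) auto
          have Hu: "near d m i u s" "near d m j u s" using CH[OF u(2)] by (auto simp: H_def)
          have Hx: "near d m i x s" "near d m j x s" using Hu cx by (auto simp: near_def)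
          have Mx': "Mx = Max ((\<lambda>l. cnt x l s) ` {1..d})" using cx by (simp add: Mx_def)
          have a': "a = Mx - cnt x i s" using cx by (simp add: a_def)
          define b where "b = Mx - cnt x j s"
          have pt: "a + b \<le> 2*m" "tie d i j x (s+a+b)"
            using pattern_tie[OF d1 ij Hx Mx' a' b_def, of x] xw by (auto simp: w_def)
          then show "G s x" unfolding G_def by (intro bexI[of _ "s+a+b"]) auto
        qed
      qed
      have locCG: "loc {1..s+2*m} (\<lambda>x. C x \<and> G s x)"
        by (intro loc_conj locG loc_mono[OF C]) auto
      have locCnG: "loc {1..s+2*m} (\<lambda>x. C x \<and> \<not> G s x)"
        by (intro loc_conj loc_not locG loc_mono[OF C]) auto
      have e1: "ev (\<lambda>x. C x \<and> G s x) \<in> events" by (rule ev_events[OF _ _ locCG]) auto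
      have e2: "ev (\<lambda>x. C x \<and> \<not> G s x) \<in> events" by (rule ev_events[OF _ _ locCnG]) auto
      have "ev C = ev (\<lambda>x. C x \<and> G s x) \<union> ev (\<lambda>x. C x \<and> \<not> G s x)" by (auto simp: ev_def)
      moreover have "ev (\<lambda>x. C x \<and> G s x) \<inter> ev (\<lambda>x. C x \<and> \<not> G s x) = {}" by (auto simp: ev_def)
      ultimately have "prob (ev C) = prob (ev (\<lambda>x. C x \<and> G s x)) + prob (ev (\<lambda>x. C x \<and> \<not> G s x))"
        using e1 e2 by (simp add: finite_measure_Union)
      then show ?thesis using low by (simp add: algebra_simps)
    qed
    have bc: "AE \<omega> in M. (\<exists>\<^sub>\<infinity>s. H s (\<lambda>t. X t \<omega>)) \<longrightarrow> (\<exists>\<^sub>\<infinity>s. G s (\<lambda>t. X t \<omega>))"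
      by (rule cond_bc[OF locH locG p step])
    show ?thesis
    proof (rule AE_mp[OF bc], intro AE_I2 impI)
      fix \<omega> assume h1: "(\<exists>\<^sub>\<infinity>s. H s (\<lambda>t. X t \<omega>)) \<longrightarrow> (\<exists>\<^sub>\<infinity>s. G s (\<lambda>t. X t \<omega>))"
        and h2: "\<exists>\<^sub>\<infinity>t. near d m i (\<lambda>t. X t \<omega>) t \<and> near d m j (\<lambda>t. X t \<omega>) t"
      have "\<exists>\<^sub>\<infinity>s. G s (\<lambda>t. X t \<omega>)" using h1 h2 by (simp add: H_def)
      then have g: "\<forall>a. \<exists>s\<ge>a. G s (\<lambda>t. X t \<omega>)" by (simp add: INFM_nat_le)
      have "\<forall>a. \<exists>t\<ge>a. tie d i j (\<lambda>t. X t \<omega>) t"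
      proof
        fix a obtain s where "s \<ge> a" "G s (\<lambda>t. X t \<omega>)" using g by blast
        then obtain t where "t \<in> {s..s+2*m}" "tie d i j (\<lambda>t. X t \<omega>) t" "s \<ge> a"
          unfolding G_def by blast
        then show "\<exists>t\<ge>a. tie d i j (\<lambda>t. X t \<omega>) t" by (intro exI[of _ t]) auto
      qed
      then show "\<exists>\<^sub>\<infinity>t. tie d i j (\<lambda>t. X t \<omega>) t" by (simp add: INFM_nat_le)
    qed
  qed
  have "AE \<omega> in M. \<forall>m. (\<exists>\<^sub>\<infinity>t. near d m i (\<lambda>t. X t \<omega>) t \<and> near d m j (\<lambda>t. X t \<omega>) t)
                      \<longrightarrow> (\<exists>\<^sub>\<infinity>t. tie d i j (\<lambda>t. X t \<omega>) t)"
    by (subst AE_all_countable) (use one in blast)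
  then show ?thesis by (rule AE_mp) (auto intro!: AE_I2)
qed

lemma zero_one:
  assumes ij: "i \<in> {1..d}" "j \<in> {1..d}"
    and pos: "prob (ev (\<lambda>x. \<exists>\<^sub>\<infinity>t. tie d i j x t)) > 0"
  shows "AE \<omega> in M. \<exists>\<^sub>\<infinity>t. tie d i j (\<lambda>t. X t \<omega>) t"
proof -
  let ?V = "ev (\<lambda>x. \<exists>m. \<exists>\<^sub>\<infinity>t. near d m i x t \<and> near d m j x t)"
  let ?T = "ev (\<lambda>x. \<exists>\<^sub>\<infinity>t. tie d i j x t)"
  have evV: "?V \<in> events" by (rule ev_ex_INFM_events) (intro loc_conj loc_near)
  have sub: "?T \<subseteq> ?V"
  proof
    fix \<omega> assume "\<omega> \<in> ?T"
    then have "\<omega> \<in> space M" "\<exists>\<^sub>\<infinity>t. tie d i j (\<lambda>t. X t \<omega>) t" by (auto simp: ev_def)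
    moreover have "tie d i j x t \<Longrightarrow> near d 0 i x t \<and> near d 0 j x t" for x t
      by (auto simp: tie_def near_def)
    ultimately have "\<exists>\<^sub>\<infinity>t. near d 0 i (\<lambda>t. X t \<omega>) t \<and> near d 0 j (\<lambda>t. X t \<omega>) t"
      by (auto elim: INFM_mono)
    then show "\<omega> \<in> ?V" using \<open>\<omega> \<in> space M\<close> by (auto simp: ev_def)
  qed
  have "prob ?T \<le> prob ?V" using sub evV by (intro finite_measure_mono)
  then have "prob ?V \<noteq> 0" using pos by simp
  then have "prob ?V = 1" using tail01[of i j] by simp
  then have "AE \<omega> in M. \<omega> \<in> ?V" by (rule AE_prob_1)
  then show ?thesis
    by (rule AE_mp[OF _ AE_mp[OF catchup[OF ij]]]) (auto intro!: AE_I2 simp: ev_def)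
qed

lemma prob_INFM_formula:
  assumes locQ: "\<And>t. loc {1..t} (Q t)"
  shows "prob (ev (\<lambda>x. \<exists>\<^sub>\<infinity>t. Q t x)) =
         lim (\<lambda>n. lim (\<lambda>T. real (card {u \<in> PiE {1..T} (\<lambda>_. {1..d}). \<exists>t\<in>{n..T}. Q t u}) * (1 / d) ^ T))"
proof -
  define A where "A n T = ev (\<lambda>x. \<exists>t\<in>{n..T}. Q t x)" for n T
  define B where "B n = ev (\<lambda>x. \<exists>t\<ge>n. Q t x)" for n
  have locA: "loc {1..T} (\<lambda>x. \<exists>t\<in>{n..T}. Q t x)" for n T by (rule loc_Ex_tie[OF locQ])
  have evA: "A n T \<in> events" for n T unfolding A_def by (rule ev_events[OF _ _ locA]) auto
  have pA: "prob (A n T) = real (card {u \<in> PiE {1..T} (\<lambda>_. {1..d}). \<exists>t\<in>{n..T}. Q t u}) * (1 / d) ^ T" for n T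
  proof -
    have "prob (A n T) = real (card {u \<in> PiE {1..T} (\<lambda>_. {1..d}). \<exists>t\<in>{n..T}. Q t u}) * (1 / d) ^ card {1..T}"
      unfolding A_def by (rule prob_ev_count[OF _ _ locA]) auto
    then show ?thesis by simp
  qed
  have UA: "(\<Union>T. A n T) = B n" for n
  proof
    show "(\<Union>T. A n T) \<subseteq> B n"
    proof
      fix \<omega> assume "\<omega> \<in> (\<Union>T. A n T)"
      then obtain T t where "\<omega> \<in> space M" "t \<in> {n..T}" "Q t (\<lambda>t. X t \<omega>)"
        unfolding A_def ev_def by blast
      then show "\<omega> \<in> B n" unfolding B_def ev_def by auto
    qed
    show "B n \<subseteq> (\<Union>T. A n T)"
    proof
      fix \<omega> assume "\<omega> \<in> B n"
      then obtain t where t: "\<omega> \<in> space M" "t \<ge> n" "Q t (\<lambda>t. X t \<omega>)" unfolding B_def ev_def by blast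
      then have "t \<in> {n..t}" by simp
      then have "\<omega> \<in> A n t" unfolding A_def ev_def using t by blast
      then show "\<omega> \<in> (\<Union>T. A n T)" by blast
    qed
  qed
  have evB: "B n \<in> events" for n unfolding UA[symmetric] using evA by (intro sets.countable_UN) auto
  have incA: "incseq (A n)" for n
    unfolding incseq_def
  proof (intro allI impI subsetI)
    fix T T' \<omega> assume "T \<le> T'" "\<omega> \<in> A n T"
    then obtain t where "\<omega> \<in> space M" "t \<in> {n..T}" "Q t (\<lambda>t. X t \<omega>)" "T \<le> T'"
      unfolding A_def ev_def by blast
    then have "\<omega> \<in> space M" "t \<in> {n..T'}" "Q t (\<lambda>t. X t \<omega>)" by auto
    then show "\<omega> \<in> A n T'" unfolding A_def ev_def by blast
  qed
  have decB: "decseq B"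
    unfolding decseq_def
  proof (intro allI impI subsetI)
    fix m m' \<omega> assume "m \<le> m'" "\<omega> \<in> B m'"
    then obtain t where "\<omega> \<in> space M" "t \<ge> m'" "Q t (\<lambda>t. X t \<omega>)" "m \<le> m'"
      unfolding B_def ev_def by blast
    then have "\<omega> \<in> space M" "t \<ge> m" "Q t (\<lambda>t. X t \<omega>)" by auto
    then show "\<omega> \<in> B m" unfolding B_def ev_def by blast
  qed
  have "(\<lambda>T. prob (A n T)) \<longlonglongrightarrow> prob (\<Union>T. A n T)" for n
    using evA incA by (intro finite_Lim_measure_incseq) auto
  then have limA: "lim (\<lambda>T. prob (A n T)) = prob (B n)" for n unfolding UA by (rule limI)
  have IB: "(\<Inter>n. B n) = ev (\<lambda>x. \<exists>\<^sub>\<infinity>t. Q t x)"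
    unfolding B_def ev_def INFM_nat_le by blast
  have "(\<lambda>n. prob (B n)) \<longlonglongrightarrow> prob (\<Inter>n. B n)"
    using evB decB by (intro finite_Lim_measure_decseq) auto
  then have limB: "lim (\<lambda>n. prob (B n)) = prob (ev (\<lambda>x. \<exists>\<^sub>\<infinity>t. Q t x))" unfolding IB by (rule limI)
  have "(\<lambda>n. lim (\<lambda>T. real (card {u \<in> PiE {1..T} (\<lambda>_. {1..d}). \<exists>t\<in>{n..T}. Q t u}) * (1 / d) ^ T))
        = (\<lambda>n. prob (B n))"
    using limA by (simp only: pA[symmetric])
  then show ?thesis using limB by simp
qed

lemma sym_pair:
  assumes inv: "\<And>y. \<tau> (\<sigma> y) = y" "\<And>y. \<sigma> (\<tau> y) = y"
    and sd: "\<And>y. y \<in> {1..d} \<Longrightarrow> \<sigma> y \<in> {1..d}" and td: "\<And>y. y \<in> {1..d} \<Longrightarrow> \<tau> y \<in> {1..d}"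
  shows "prob (ev (\<lambda>x. \<exists>\<^sub>\<infinity>t. tie d (\<tau> i) (\<tau> j) x t)) = prob (ev (\<lambda>x. \<exists>\<^sub>\<infinity>t. tie d i j x t))"
proof -
  have img: "\<sigma> ` {1..d} = {1..d}"
  proof
    show "\<sigma> ` {1..d} \<subseteq> {1..d}" using sd by auto
    show "{1..d} \<subseteq> \<sigma> ` {1..d}"
    proof
      fix y assume "y \<in> {1..d}"
      then show "y \<in> \<sigma> ` {1..d}" using td inv(2)[of y] by (metis imageI)
    qed
  qed
  have injs: "inj_on \<sigma> {1..d}" by (metis inv(1) inj_on_inverseI)
  interpret Y: bins M "\<lambda>t \<omega>. \<sigma> (X t \<omega>)" d
  proof
    show "1 \<le> d" by (rule d1)
    show "indep_vars (\<lambda>_. count_space UNIV) (\<lambda>t \<omega>. \<sigma> (X t \<omega>)) {1..}"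
      by (rule indep_vars_compose2[OF ind]) simp
    fix t :: nat assume t: "1 \<le> t"
    have "distr M (count_space UNIV) (\<lambda>\<omega>. \<sigma> (X t \<omega>)) =
          distr (distr M (count_space UNIV) (X t)) (count_space UNIV) \<sigma>"
      using X_meas[OF t] by (subst distr_distr) (auto simp: comp_def)
    also have "\<dots> = distr (measure_pmf (pmf_of_set {1..d})) (count_space UNIV) \<sigma>" using unif[OF t] by simp
    also have "\<dots> = measure_pmf (map_pmf \<sigma> (pmf_of_set {1..d}))" by (simp add: map_pmf_rep_eq)
    also have "map_pmf \<sigma> (pmf_of_set {1..d}) = pmf_of_set (\<sigma> ` {1..d})"
      by (rule map_pmf_of_set_inj[OF injs]) (use d1 in auto)
    also have "\<dots> = pmf_of_set {1..d}" by (simp only: img)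
    finally show "distr M (count_space UNIV) (\<lambda>\<omega>. \<sigma> (X t \<omega>)) = measure_pmf (pmf_of_set {1..d})" .
  qed
  have evY: "Y.ev P = ev (\<lambda>x. P (\<lambda>s. \<sigma> (x s)))" for P by (simp add: Y.ev_def ev_def)
  have "ev (\<lambda>x. \<exists>\<^sub>\<infinity>t. tie d (\<tau> i) (\<tau> j) x t) = Y.ev (\<lambda>x. \<exists>\<^sub>\<infinity>t. tie d i j x t)"
  proof -
    have tf: "tie d i j (\<lambda>s. \<sigma> (x s)) = tie d (\<tau> i) (\<tau> j) x" for x
      by (rule ext) (rule tie_comp[OF inv sd td])
    show ?thesis unfolding evY tf ..
  qed
  also have "prob \<dots> = prob (ev (\<lambda>x. \<exists>\<^sub>\<infinity>t. tie d i j x t))"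
  proof -
    have e1: "prob (Y.ev (\<lambda>x. \<exists>\<^sub>\<infinity>t. tie d i j x t)) =
         lim (\<lambda>n. lim (\<lambda>T. real (card {u \<in> PiE {1..T} (\<lambda>_. {1..d}). \<exists>t\<in>{n..T}. tie d i j u t}) * (1 / d) ^ T))"
      by (rule Y.prob_INFM_formula[OF loc_tie])
    have e2: "prob (ev (\<lambda>x. \<exists>\<^sub>\<infinity>t. tie d i j x t)) =
         lim (\<lambda>n. lim (\<lambda>T. real (card {u \<in> PiE {1..T} (\<lambda>_. {1..d}). \<exists>t\<in>{n..T}. tie d i j u t}) * (1 / d) ^ T))"
      by (rule prob_INFM_formula[OF loc_tie])
    show ?thesis unfolding e1 e2 ..
  qed
  finally show ?thesis .
qed

end



context bins begin

lemma pos_of_AE_ex: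
  assumes K: "finite K" and A: "\<And>k. k \<in> K \<Longrightarrow> A k \<in> events"
    and ae: "AE \<omega> in M. \<exists>k\<in>K. \<omega> \<in> A k"
  shows "\<exists>k\<in>K. prob (A k) > 0"
proof (rule ccontr)
  assume "\<not> ?thesis"
  then have z: "prob (A k) = 0" if "k \<in> K" for k
  proof -
    have "\<not> prob (A k) > 0" using \<open>\<not> (\<exists>k\<in>K. prob (A k) > 0)\<close> that by blast
    then show ?thesis using measure_nonneg[of M "A k"] by linarith
  qed
  have "AE \<omega> in M. \<forall>k\<in>K. \<omega> \<notin> A k"
    using K by (intro AE_finite_allI AE_not_in null_of_prob0 A z)
  then have "AE \<omega> in M. (\<exists>k\<in>K. \<omega> \<in> A k) \<and> (\<forall>k\<in>K. \<omega> \<notin> A k)" using ae by (intro AE_conjI)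
  then have "AE \<omega> in M. False" by (rule AE_mp) (rule AE_I2, blast)
  then show False using AE_False by simp
qed

lemma evT: "ev (\<lambda>x. \<exists>\<^sub>\<infinity>t. tie d i j x t) \<in> events"
  by (rule ev_INFM_events[OF loc_tie])

lemma all_diag: "AE \<omega> in M. \<forall>i\<in>{1..d}. \<exists>\<^sub>\<infinity>t. tie d i i (\<lambda>t. X t \<omega>) t"
proof -
  have ae: "AE \<omega> in M. \<exists>k\<in>{1..d}. \<omega> \<in> ev (\<lambda>x. \<exists>\<^sub>\<infinity>t. tie d k k x t)"
  proof (rule AE_I2)
    fix \<omega> assume "\<omega> \<in> space M"
    then show "\<exists>k\<in>{1..d}. \<omega> \<in> ev (\<lambda>x. \<exists>\<^sub>\<infinity>t. tie d k k x t)"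
      using some_leader_io[OF d1, of "\<lambda>t. X t \<omega>"] by (auto simp: ev_def)
  qed
  obtain k where k: "k \<in> {1..d}" "prob (ev (\<lambda>x. \<exists>\<^sub>\<infinity>t. tie d k k x t)) > 0"
    using pos_of_AE_ex[OF _ _ ae] evT by auto
  have "AE \<omega> in M. \<exists>\<^sub>\<infinity>t. tie d i i (\<lambda>t. X t \<omega>) t" if i: "i \<in> {1..d}" for i
  proof (rule zero_one[OF i i])
    have "prob (ev (\<lambda>x. \<exists>\<^sub>\<infinity>t. tie d (swp k i i) (swp k i i) x t)) = prob (ev (\<lambda>x. \<exists>\<^sub>\<infinity>t. tie d i i x t))"
      by (rule sym_pair[where \<sigma>="swp k i" and \<tau>="swp k i"]) (use swp_in[OF k(1) i] in auto)
    moreover have "swp k i i = k" by (simp add: swp_def)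
    ultimately show "prob (ev (\<lambda>x. \<exists>\<^sub>\<infinity>t. tie d i i x t)) > 0" using k by simp
  qed
  then show ?thesis by (intro AE_finite_allI) auto
qed

lemma all_pairs: "AE \<omega> in M. \<forall>i\<in>{1..d}. \<forall>j\<in>{1..d}. \<exists>\<^sub>\<infinity>t. tie d i j (\<lambda>t. X t \<omega>) t"
proof -
  have off: "AE \<omega> in M. \<exists>\<^sub>\<infinity>t. tie d i j (\<lambda>t. X t \<omega>) t"
    if ij: "i \<in> {1..d}" "j \<in> {1..d}" "i \<noteq> j" for i j
  proof -
    have d2: "d \<ge> 2" using ij by auto
    let ?K = "{p. fst p \<in> {1..d} \<and> snd p \<in> {1..d} \<and> fst p \<noteq> snd p}"
    have finK: "finite ?K" by (rule finite_subset[of _ "{1..d} \<times> {1..d}"]) auto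
    have ae: "AE \<omega> in M. \<exists>p\<in>?K. \<omega> \<in> ev (\<lambda>x. \<exists>\<^sub>\<infinity>t. tie d (fst p) (snd p) x t)"
      using all_diag
    proof (rule AE_mp, intro AE_I2 impI)
      fix \<omega> assume om: "\<omega> \<in> space M" and h: "\<forall>i\<in>{1..d}. \<exists>\<^sub>\<infinity>t. tie d i i (\<lambda>t. X t \<omega>) t"
      obtain k l where kl: "k \<in> {1..d}" "l \<in> {1..d}" "k \<noteq> l" "\<exists>\<^sub>\<infinity>t. tie d k l (\<lambda>t. X t \<omega>) t"
        using switch_tie[OF d2 h] by blast
      then have "(k, l) \<in> ?K" "\<omega> \<in> ev (\<lambda>x. \<exists>\<^sub>\<infinity>t. tie d (fst (k,l)) (snd (k,l)) x t)"
        using om by (auto simp: ev_def)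
      then show "\<exists>p\<in>?K. \<omega> \<in> ev (\<lambda>x. \<exists>\<^sub>\<infinity>t. tie d (fst p) (snd p) x t)" by blast
    qed
    obtain p where p: "p \<in> ?K" "prob (ev (\<lambda>x. \<exists>\<^sub>\<infinity>t. tie d (fst p) (snd p) x t)) > 0"
      using pos_of_AE_ex[OF finK _ ae] evT by blast
    define k where "k = fst p"
    define l where "l = snd p"
    have kl: "k \<in> {1..d}" "l \<in> {1..d}" "k \<noteq> l" using p(1) by (auto simp: k_def l_def)
    define l' where "l' = swp k i l"
    have l': "l' \<in> {1..d}" unfolding l'_def using kl ij by (intro swp_in)
    have l'i: "l' \<noteq> i" using kl unfolding l'_def swp_def by auto
    define \<sigma> where "\<sigma> y = swp l' j (swp k i y)" for y
    define \<tau> where "\<tau> y = swp k i (swp l' j y)" for y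
    have ti: "\<tau> i = k" using l'i ij(3) by (simp add: \<tau>_def swp_def)
    have tj: "\<tau> j = l" by (simp add: \<tau>_def l'_def swp_def)
    have "prob (ev (\<lambda>x. \<exists>\<^sub>\<infinity>t. tie d (\<tau> i) (\<tau> j) x t)) = prob (ev (\<lambda>x. \<exists>\<^sub>\<infinity>t. tie d i j x t))"
    proof (rule sym_pair[where \<sigma>=\<sigma> and \<tau>=\<tau>])
      show "\<tau> (\<sigma> y) = y" for y by (simp add: \<tau>_def \<sigma>_def)
      show "\<sigma> (\<tau> y) = y" for y by (simp add: \<tau>_def \<sigma>_def)
      show "\<sigma> y \<in> {1..d}" if "y \<in> {1..d}" for y
        unfolding \<sigma>_def using that kl ij l' by (intro swp_in) auto
      show "\<tau> y \<in> {1..d}" if "y \<in> {1..d}" for y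
        unfolding \<tau>_def using that kl ij l' by (intro swp_in) auto
    qed
    then have "prob (ev (\<lambda>x. \<exists>\<^sub>\<infinity>t. tie d i j x t)) > 0"
      using p(2) ti tj by (simp add: k_def l_def)
    then show ?thesis by (rule zero_one[OF ij(1,2)])
  qed
  have "AE \<omega> in M. \<exists>\<^sub>\<infinity>t. tie d i j (\<lambda>t. X t \<omega>) t" if ij: "i \<in> {1..d}" "j \<in> {1..d}" for i j
  proof (cases "i = j")
    case True
    from all_diag show ?thesis by (rule AE_mp) (use True ij in \<open>auto intro!: AE_I2\<close>)
  next
    case False
    then show ?thesis using off ij by blast
  qed
  then show ?thesis by (intro AE_finite_allI) auto
qed

end

lemma bin_count_cnt: "bin_count X k t \<omega> = cnt (\<lambda>s. X s \<omega>) k t"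
  by (simp add: bin_count_def cnt_def)

lemma max_load_cnt: "max_load X d t \<omega> = Max ((\<lambda>k. cnt (\<lambda>s. X s \<omega>) k t) ` {1..d})"
  by (simp add: max_load_def bin_count_cnt)


theorem lemma4p9:
  fixes M :: "'a measure" and X :: "nat \<Rightarrow> 'a \<Rightarrow> nat" and d :: nat
  assumes "prob_space M"
    and "d \<ge> 1"
    and "prob_space.indep_vars M (\<lambda>_. count_space UNIV) X {1..}"
    and "\<And>t. t \<ge> 1 \<Longrightarrow> distr M (count_space UNIV) (X t) = measure_pmf (pmf_of_set {1..d})"
  shows "AE \<omega> in M.
           (\<forall>i\<in>{1..d}. \<exists>\<^sub>\<infinity>t. bin_count X i t \<omega> = max_load X d t \<omega>)
         \<and> (\<forall>i\<in>{1..d}. \<forall>j\<in>{1..d}. \<exists>\<^sub>\<infinity>t.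
               bin_count X i t \<omega> = bin_count X j t \<omega> \<and> bin_count X j t \<omega> = max_load X d t \<omega>)"
proof -
  have B: "bins M X d"
    using assms unfolding bins_def bins_axioms_def by auto
  interpret bins M X d by (rule B)
  have key: "tie d i j x t \<Longrightarrow> j \<in> {1..d} \<Longrightarrow>
      cnt x i t = cnt x j t \<and> cnt x j t = Max ((\<lambda>k. cnt x k t) ` {1..d})" for i j x t
    using tie_iff_max[OF d1, of j x t] by (auto simp: tie_def)
  show ?thesis
  proof (rule AE_mp[OF all_pairs], intro AE_I2 impI conjI ballI)
    fix \<omega> assume h: "\<forall>i\<in>{1..d}. \<forall>j\<in>{1..d}. \<exists>\<^sub>\<infinity>t. tie d i j (\<lambda>t. X t \<omega>) t"
    fix i assume i: "i \<in> {1..d}"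
    have "\<exists>\<^sub>\<infinity>t. tie d i i (\<lambda>t. X t \<omega>) t" using h i by blast
    then show "\<exists>\<^sub>\<infinity>t. bin_count X i t \<omega> = max_load X d t \<omega>"
    proof (rule INFM_mono)
      fix t assume "tie d i i (\<lambda>t. X t \<omega>) t"
      then show "bin_count X i t \<omega> = max_load X d t \<omega>"
        using key[of i i "\<lambda>t. X t \<omega>" t] i by (simp add: bin_count_cnt max_load_cnt)
    qed
    fix j assume j: "j \<in> {1..d}"
    have "\<exists>\<^sub>\<infinity>t. tie d i j (\<lambda>t. X t \<omega>) t" using h i j by blast
    then show "\<exists>\<^sub>\<infinity>t. bin_count X i t \<omega> = bin_count X j t \<omega> \<and> bin_count X j t \<omega> = max_load X d t \<omega>"
    proof (rule INFM_mono)
      fix t assume "tie d i j (\<lambda>t. X t \<omega>) t"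
      then show "bin_count X i t \<omega> = bin_count X j t \<omega> \<and> bin_count X j t \<omega> = max_load X d t \<omega>"
        using key[of i j "\<lambda>t. X t \<omega>" t] j by (simp add: bin_count_cnt max_load_cnt)
    qed
  qed
qed

end
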